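(* For every marked poset $(P,A,\lambda)$, the marked order polytope $\mathcal{O}_{P,A}(\lambda)$ and the marked chain polytope $\mathcal{C}_{P,A}(\lambda)$ are both normal (lattice) polytopes.
   Context: A marked poset is a triple $(P,A,\lambda)$ where $(P,\prec)$ is a finite poset, $A\subseteq P$ contains all minimal and all maximal elements of $P$, and $\lambda:A\to\mathbb{Z}_{\ge 0}$, $a\mapsto\lambda_a$. The marked order polytope $\mathcal{O}_{P,A}(\lambda)\subset\mathbb{R}^{P\setminus A}$ is the set of $(x_p)_{p\in P\setminus A}$ with $x_p\le x_q$ for $p\prec q$ in $P\setminus A$, $x_p\le\lambda_a$ for $p\prec a$, $a\in A$, and $\lambda_b\le x_q$ for $b\prec q$, $b\in A$. The marked chain polytope $\mathcal{C}_{P,A}(\lambda)\subset\mathbb{R}^{P\setminus A}$ is the set of $(x_p)_{p\in P\setminus A}$ with $x_p\ge0$ for all $p$, and $x_{p_1}+\cdots+x_{p_n}\le\lambda_a-\lambda_b$ for every chain $b\prec p_n\prec\cdots\prec p_1\prec a$ with $n\ge1$, $a,b\in A$, $p_i\in P\setminus A$. A lattice polytope $Q\subset\mathbb{R}^d$ is normal if for every $n\in\mathbb{N}$ the set $nQ\cap\mathbb{Z}^d$ is the $n$-fold Minkowski sum of $Q\cap\mathbb{Z}^d$. *)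

theory Defs
  imports Complex_Main "HOL-Library.Function_Algebras"
begin

text \<open>A marked poset (P, A, lambda): P is a finite set carrying the strict partial order lt
  (only its restriction to P matters), A is a subset of P containing all minimal and all
  maximal elements of P, and lambda : A -> Z_{>=0} is given as a function into nat
  (only its values on A matter).\<close>

definition marked_poset :: "'a set \<Rightarrow> ('a \<Rightarrow> 'a \<Rightarrow> bool) \<Rightarrow> 'a set \<Rightarrow> bool" where
  "marked_poset P lt A \<longleftrightarrow>
     finite P \<and>
     (\<forall>p\<in>P. \<not> lt p p) \<and>
     (\<forall>p\<in>P. \<forall>q\<in>P. \<forall>r\<in>P. lt p q \<and> lt q r \<longrightarrow> lt p r) \<and>
     A \<subseteq> P \<and>
     (\<forall>p\<in>P. (\<forall>q\<in>P. \<not> lt q p) \<longrightarrow> p \<in> A) \<and>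
     (\<forall>p\<in>P. (\<forall>q\<in>P. \<not> lt p q) \<longrightarrow> p \<in> A)"

text \<open>Points of R^(P - A) are represented as functions 'a => real vanishing outside P - A.\<close>

definition marked_order_polytope ::
  "'a set \<Rightarrow> ('a \<Rightarrow> 'a \<Rightarrow> bool) \<Rightarrow> 'a set \<Rightarrow> ('a \<Rightarrow> nat) \<Rightarrow> ('a \<Rightarrow> real) set" where
  "marked_order_polytope P lt A lam =
     {x. (\<forall>p. p \<notin> P - A \<longrightarrow> x p = 0) \<and>
         (\<forall>p\<in>P - A. \<forall>q\<in>P - A. lt p q \<longrightarrow> x p \<le> x q) \<and>
         (\<forall>p\<in>P - A. \<forall>a\<in>A. lt p a \<longrightarrow> x p \<le> real (lam a)) \<and>
         (\<forall>b\<in>A. \<forall>q\<in>P - A. lt b q \<longrightarrow> real (lam b) \<le> x q)}"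

text \<open>A chain b < p_n < ... < p_1 < a with n >= 1 is encoded by the list [p_1, ..., p_n].\<close>

definition marked_chain_polytope ::
  "'a set \<Rightarrow> ('a \<Rightarrow> 'a \<Rightarrow> bool) \<Rightarrow> 'a set \<Rightarrow> ('a \<Rightarrow> nat) \<Rightarrow> ('a \<Rightarrow> real) set" where
  "marked_chain_polytope P lt A lam =
     {x. (\<forall>p. p \<notin> P - A \<longrightarrow> x p = 0) \<and>
         (\<forall>p\<in>P - A. 0 \<le> x p) \<and>
         (\<forall>a\<in>A. \<forall>b\<in>A. \<forall>ps. ps \<noteq> [] \<and> set ps \<subseteq> P - A \<and>
              sorted_wrt (\<lambda>u v. lt v u) ps \<and> lt b (last ps) \<and> lt (hd ps) a
              \<longrightarrow> sum_list (map x ps) \<le> real (lam a) - real (lam b))}"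

definition lattice_points :: "('a \<Rightarrow> real) set \<Rightarrow> ('a \<Rightarrow> real) set" where
  "lattice_points Q = {x \<in> Q. \<forall>p. x p \<in> \<int>}"

definition dilate :: "nat \<Rightarrow> ('a \<Rightarrow> real) set \<Rightarrow> ('a \<Rightarrow> real) set" where
  "dilate n Q = {(\<lambda>p. real n * y p) | y. y \<in> Q}"

fun minkowski_power :: "('a \<Rightarrow> real) set \<Rightarrow> nat \<Rightarrow> ('a \<Rightarrow> real) set" where
  "minkowski_power S 0 = {0}"
| "minkowski_power S (Suc n) = {y + z | y z. y \<in> minkowski_power S n \<and> z \<in> S}"

definition lattice_polytope :: "('a \<Rightarrow> real) set \<Rightarrow> bool" where
  "lattice_polytope Q \<longleftrightarrow>
     finite (lattice_points Q) \<and>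
     Q = {x. \<exists>S u. finite S \<and> S \<subseteq> lattice_points Q \<and> (\<forall>s\<in>S. 0 \<le> u s) \<and>
                   sum u S = 1 \<and> x = (\<lambda>p. \<Sum>s\<in>S. u s * s p)}"

definition normal_polytope :: "('a \<Rightarrow> real) set \<Rightarrow> bool" where
  "normal_polytope Q \<longleftrightarrow>
     (\<forall>n\<ge>1. lattice_points (dilate n Q) = minkowski_power (lattice_points Q) n)"

end

theory Submission
  imports Defs "HOL-Library.FuncSet"
begin


lemma hermite_step:
  fixes n :: nat and m :: int assumes "n \<ge> 1"
  shows "(\<Sum>k<n. (m + 1 + int k) div int n) = (\<Sum>k<n. (m + int k) div int n) + 1"
proof -
  define g where "g k = (m + int k) div int n" for k
  have "(\<Sum>k<Suc n. g k) = g 0 + (\<Sum>k<n. g (Suc k))" by (rule sum.lessThan_Suc_shift)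
  moreover have "(\<Sum>k<Suc n. g k) = (\<Sum>k<n. g k) + g n" by simp
  moreover have "g n = g 0 + 1" unfolding g_def using assms by (simp add: div_add_self2)
  ultimately have "(\<Sum>k<n. g (Suc k)) = (\<Sum>k<n. g k) + 1" by simp
  then show ?thesis unfolding g_def by (simp add: add.assoc)
qed

lemma hermite_int:
  fixes n :: nat and m :: int assumes "n \<ge> 1"
  shows "(\<Sum>k<n. (m + int k) div int n) = m"
proof (induction m rule: int_induct[where k=0])
  case base
  have "(\<Sum>k<n. (0 + int k) div int n) = (\<Sum>k<n. 0)"
    by (rule sum.cong) auto
  then show ?case by simp
next
  case (step1 i) then show ?case using hermite_step[OF assms, of i] by simp
next
  case (step2 i) then show ?case using hermite_step[OF assms, of "i - 1"] by simp
qed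

lemma hermite_real:
  fixes n :: nat and m :: int assumes "n \<ge> 1"
  shows "(\<Sum>k<n. real_of_int \<lfloor>(real_of_int m + real k) / real n\<rfloor>) = real_of_int m"
proof -
  have "\<lfloor>(real_of_int m + real k) / real n\<rfloor> = (m + int k) div int n" for k
  proof -
    have "(real_of_int m + real k) / real n = real_of_int (m + int k) / real_of_int (int n)" by simp
    then show ?thesis using floor_divide_of_int_eq by metis
  qed
  then have "(\<Sum>k<n. real_of_int \<lfloor>(real_of_int m + real k) / real n\<rfloor>) = real_of_int (\<Sum>k<n. (m + int k) div int n)"
    by simp
  then show ?thesis using hermite_int[OF assms] by simp
qed

definition nxt :: "real set \<Rightarrow> real \<Rightarrow> real" where
  "nxt T t = Min ({s\<in>T. t < s} \<union> {1})"

lemma nxt_gt: "finite T \<Longrightarrow> t < 1 \<Longrightarrow> t < nxt T t"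
  unfolding nxt_def by (subst Min_gr_iff) auto

lemma tele:
  assumes fin: "finite T" and sub: "T \<subseteq> {0..<1}"
  shows "s \<in> T \<Longrightarrow> (\<Sum>t\<in>{t\<in>T. s \<le> t}. nxt T t - t) = 1 - s"
proof (induction "card {t\<in>T. s \<le> t}" arbitrary: s rule: less_induct)
  case less
  show ?case
  proof (cases "{t\<in>T. s < t} = {}")
    case True
    then have "{t\<in>T. s \<le> t} = {s}" using less.prems by force
    moreover have "nxt T s = 1" unfolding nxt_def True by (metis Min_singleton sup_bot.left_neutral)
    ultimately show ?thesis by simp
  next
    case False
    define s' where "s' = Min {t\<in>T. s < t}"
    have s'in: "s' \<in> {t\<in>T. s < t}" unfolding s'_def using False fin by (intro Min_in) auto
    have s'le: "t \<in> T \<Longrightarrow> s < t \<Longrightarrow> s' \<le> t" for t unfolding s'_def using fin by (intro Min_le) auto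
    have "s' < 1" using s'in sub by auto
    have nx: "nxt T s = s'" unfolding nxt_def using s'in s'le `s' < 1`
      by (intro Min_eqI) (use fin in auto)
    have eq: "{t\<in>T. s \<le> t} = insert s {t\<in>T. s' \<le> t}" using s'in s'le less.prems by force
    have "s \<notin> {t\<in>T. s' \<le> t}" using s'in by auto
    have lt: "card {t\<in>T. s' \<le> t} < card {t\<in>T. s \<le> t}"
      unfolding eq using `s \<notin> _` fin by simp
    have IH: "(\<Sum>t\<in>{t\<in>T. s' \<le> t}. nxt T t - t) = 1 - s'"
      using less.hyps[OF lt] s'in by auto
    show ?thesis unfolding eq using `s \<notin> _` fin IH nx by simp
  qed
qed

lemma floor_shift:
  fixes v t :: real assumes "0 \<le> t" "t < 1"
  shows "real_of_int \<lfloor>v + t\<rfloor> = real_of_int \<lfloor>v\<rfloor> + (if 1 - frac v \<le> t then 1 else 0)"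
proof -
  have fv: "v = real_of_int \<lfloor>v\<rfloor> + frac v" by (simp add: frac_def)
  have "0 \<le> frac v" "frac v < 1" by (auto simp: frac_lt_1)
  have fd: "frac v = v - real_of_int \<lfloor>v\<rfloor>" by (simp add: frac_def)
  show ?thesis
  proof (cases "1 - frac v \<le> t")
    case True
    have "\<lfloor>v + t\<rfloor> = \<lfloor>v\<rfloor> + 1"
      unfolding floor_eq_iff using True assms `frac v < 1` `0 \<le> frac v` fd
        by (simp only: of_int_add of_int_1) (intro conjI; linarith)
    then show ?thesis using True by simp
  next
    case False
    have "\<lfloor>v + t\<rfloor> = \<lfloor>v\<rfloor>"
      unfolding floor_eq_iff using False assms `frac v < 1` `0 \<le> frac v` fd
        by (simp only: of_int_add of_int_1) (intro conjI; linarith)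
    then show ?thesis using False by simp
  qed
qed

lemma thresholds:
  fixes V :: "real set" assumes "finite V"
  shows "\<exists>T w. finite T \<and> (\<forall>t\<in>T. 0 \<le> t \<and> t < 1 \<and> 0 \<le> w t) \<and> sum w T = 1 \<and>
     (\<forall>v\<in>V. (\<Sum>t\<in>T. w t * real_of_int \<lfloor>v + t\<rfloor>) = v)"
proof -
  define T where "T = insert 0 ((\<lambda>v. 1 - frac v) ` {v\<in>V. frac v \<noteq> 0})"
  have fin: "finite T" unfolding T_def using assms by simp
  have "0 \<le> 1 - frac v \<and> 1 - frac v < 1" if "frac v \<noteq> 0" for v
  proof -
    have "0 \<le> frac v" "frac v < 1" by (simp_all add: frac_lt_1)
    moreover have "0 < frac v" using \<open>0 \<le> frac v\<close> that by simp
    ultimately show ?thesis by simp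
  qed
  moreover have "0 \<le> (0::real) \<and> (0::real) < 1" by simp
  ultimately have sub: "T \<subseteq> {0..<1}" unfolding T_def subset_iff atLeastLessThan_iff by blast
  define w where "w t = nxt T t - t" for t
  have wpos: "\<forall>t\<in>T. 0 \<le> t \<and> t < 1 \<and> 0 \<le> w t"
    using sub nxt_gt[OF fin] unfolding w_def by (auto simp: less_imp_le)
  have sum1: "sum w T = 1"
  proof -
    have "{t\<in>T. 0 \<le> t} = T" using sub by auto
    then show ?thesis using tele[OF fin sub, of 0] unfolding w_def T_def by auto
  qed
  have "(\<Sum>t\<in>T. w t * real_of_int \<lfloor>v + t\<rfloor>) = v" if "v \<in> V" for v
  proof -
    have "(\<Sum>t\<in>T. w t * real_of_int \<lfloor>v + t\<rfloor>)
        = (\<Sum>t\<in>T. w t * real_of_int \<lfloor>v\<rfloor> + (if 1 - frac v \<le> t then w t else 0))"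
    proof (rule sum.cong)
      fix t assume "t \<in> T"
      then have "0 \<le> t" "t < 1" using sub by auto
      from floor_shift[OF this, of v]
      show "w t * real_of_int \<lfloor>v + t\<rfloor> = w t * real_of_int \<lfloor>v\<rfloor> + (if 1 - frac v \<le> t then w t else 0)"
        by (simp add: distrib_left)
    qed simp
    also have "\<dots> = real_of_int \<lfloor>v\<rfloor> + (\<Sum>t\<in>{t\<in>T. 1 - frac v \<le> t}. w t)"
    proof -
      have "(\<Sum>t\<in>T. w t * real_of_int \<lfloor>v\<rfloor> + (if 1 - frac v \<le> t then w t else 0))
         = (\<Sum>t\<in>T. w t * real_of_int \<lfloor>v\<rfloor>) + (\<Sum>t\<in>T. (if 1 - frac v \<le> t then w t else 0))"
        by (rule sum.distrib)
      also have "(\<Sum>t\<in>T. w t * real_of_int \<lfloor>v\<rfloor>) = real_of_int \<lfloor>v\<rfloor>"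
        using sum1 by (simp add: sum_distrib_right[symmetric])
      also have "(\<Sum>t\<in>T. (if 1 - frac v \<le> t then w t else 0)) = (\<Sum>t\<in>{t\<in>T. 1 - frac v \<le> t}. w t)"
        using fin by (simp add: sum.inter_filter)
      finally show ?thesis .
    qed
    also have "(\<Sum>t\<in>{t\<in>T. 1 - frac v \<le> t}. w t) = frac v"
    proof (cases "frac v = 0")
      case True
      then have "{t\<in>T. 1 - frac v \<le> t} = {}" using sub True by (force simp del: frac_eq_0_iff)
      then show ?thesis using True by (metis sum.empty)
    next
      case False
      then have "1 - frac v \<in> T" unfolding T_def using that by auto
      then show ?thesis using tele[OF fin sub, of "1 - frac v"] unfolding w_def by simp
    qed
    finally show ?thesis by (simp add: frac_def)
  qed
  then show ?thesis using fin wpos sum1 by blast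
qed



locale mpos =
  fixes P :: "'a set" and lt :: "'a \<Rightarrow> 'a \<Rightarrow> bool" and A :: "'a set"
  assumes mp: "marked_poset P lt A"
begin

lemma finP: "finite P" and irr: "p \<in> P \<Longrightarrow> \<not> lt p p"
  and trans: "p \<in> P \<Longrightarrow> q \<in> P \<Longrightarrow> r \<in> P \<Longrightarrow> lt p q \<Longrightarrow> lt q r \<Longrightarrow> lt p r"
  and AP: "A \<subseteq> P"
  and minA: "p \<in> P \<Longrightarrow> (\<forall>q\<in>P. \<not> lt q p) \<Longrightarrow> p \<in> A"
  and maxA: "p \<in> P \<Longrightarrow> (\<forall>q\<in>P. \<not> lt p q) \<Longrightarrow> p \<in> A"
  using mp unfolding marked_poset_def by blast+

lemma finA: "finite A" using finP AP finite_subset by blast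

lemma below: "p \<in> P \<Longrightarrow> \<exists>b\<in>A. b = p \<or> lt b p"
proof (induction "card {q\<in>P. lt q p}" arbitrary: p rule: less_induct)
  case less
  show ?case
  proof (cases "p \<in> A")
    case True thus ?thesis by blast
  next
    case False
    then obtain q where q: "q \<in> P" "lt q p" using minA less.prems by blast
    have sub: "{r\<in>P. lt r q} \<subset> {r\<in>P. lt r p}"
      using trans q less.prems irr by blast
    have "card {r\<in>P. lt r q} < card {r\<in>P. lt r p}"
      by (rule psubset_card_mono) (use finP sub in auto)
    from less.hyps[OF this q(1)] obtain b where "b \<in> A" "b = q \<or> lt b q" by blast
    then show ?thesis using q trans less.prems AP by blast
  qed
qed

lemma above: "p \<in> P \<Longrightarrow> \<exists>a\<in>A. a = p \<or> lt p a"
proof (induction "card {q\<in>P. lt p q}" arbitrary: p rule: less_induct)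
  case less
  show ?case
  proof (cases "p \<in> A")
    case True thus ?thesis by blast
  next
    case False
    then obtain q where q: "q \<in> P" "lt p q" using maxA less.prems by blast
    have sub: "{r\<in>P. lt q r} \<subset> {r\<in>P. lt p r}"
      using trans q less.prems irr by blast
    have "card {r\<in>P. lt q r} < card {r\<in>P. lt p r}"
      by (rule psubset_card_mono) (use finP sub in auto)
    from less.hyps[OF this q(1)] obtain a where "a \<in> A" "a = q \<or> lt q a" by blast
    then show ?thesis using q trans less.prems AP by blast
  qed
qed

lemma belowI: "p \<in> P - A \<Longrightarrow> \<exists>b\<in>A. lt b p" using below by blast
lemma aboveI: "p \<in> P - A \<Longrightarrow> \<exists>a\<in>A. lt p a" using above by blast

definition ordP :: "('a \<Rightarrow> real) \<Rightarrow> ('a \<Rightarrow> real) \<Rightarrow> bool" where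
  "ordP L x \<longleftrightarrow> (\<forall>p. p \<notin> P - A \<longrightarrow> x p = 0) \<and>
         (\<forall>p\<in>P - A. \<forall>q\<in>P - A. lt p q \<longrightarrow> x p \<le> x q) \<and>
         (\<forall>p\<in>P - A. \<forall>a\<in>A. lt p a \<longrightarrow> x p \<le> L a) \<and>
         (\<forall>b\<in>A. \<forall>q\<in>P - A. lt b q \<longrightarrow> L b \<le> x q)"

definition chP :: "('a \<Rightarrow> real) \<Rightarrow> ('a \<Rightarrow> real) \<Rightarrow> bool" where
  "chP L x \<longleftrightarrow> (\<forall>p. p \<notin> P - A \<longrightarrow> x p = 0) \<and>
         (\<forall>p\<in>P - A. 0 \<le> x p) \<and>
         (\<forall>a\<in>A. \<forall>b\<in>A. \<forall>ps. ps \<noteq> [] \<and> set ps \<subseteq> P - A \<and>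
              sorted_wrt (\<lambda>u v. lt v u) ps \<and> lt b (last ps) \<and> lt (hd ps) a
              \<longrightarrow> sum_list (map x ps) \<le> L a - L b)"

definition msetv :: "('a \<Rightarrow> real) \<Rightarrow> ('a \<Rightarrow> real) \<Rightarrow> 'a \<Rightarrow> real set" where
  "msetv L x p = L ` {b\<in>A. lt b p} \<union> x ` {q\<in>P - A. lt q p}"

definition mval :: "('a \<Rightarrow> real) \<Rightarrow> ('a \<Rightarrow> real) \<Rightarrow> 'a \<Rightarrow> real" where
  "mval L x p = Max (msetv L x p)"

definition phi :: "('a \<Rightarrow> real) \<Rightarrow> ('a \<Rightarrow> real) \<Rightarrow> 'a \<Rightarrow> real" where
  "phi L x = (\<lambda>p. if p \<in> P - A then x p - mval L x p else 0)"

lemma msetv_fin: "finite (msetv L x p)"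
  unfolding msetv_def using finA finP by auto

lemma msetv_ne: "p \<in> P - A \<Longrightarrow> msetv L x p \<noteq> {}"
  unfolding msetv_def using belowI by blast

lemma mval_ge: "p \<in> P - A \<Longrightarrow> v \<in> msetv L x p \<Longrightarrow> v \<le> mval L x p"
  unfolding mval_def using msetv_fin by (rule Max_ge)

lemma mval_in: "p \<in> P - A \<Longrightarrow> mval L x p \<in> msetv L x p"
  unfolding mval_def using msetv_fin msetv_ne by (rule Max_in)

lemma mval_le: "ordP L x \<Longrightarrow> p \<in> P - A \<Longrightarrow> mval L x p \<le> x p"
  unfolding mval_def using msetv_fin msetv_ne
  by (subst Max_le_iff) (auto simp: msetv_def ordP_def)

lemma chain_bound:
  assumes "ordP L x" "b \<in> A"
  shows "ps \<noteq> [] \<Longrightarrow> set ps \<subseteq> P - A \<Longrightarrow> sorted_wrt (\<lambda>u v. lt v u) ps \<Longrightarrow> lt b (last ps)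
    \<Longrightarrow> sum_list (map (phi L x) ps) \<le> x (hd ps) - L b"
proof (induction ps)
  case Nil thus ?case by simp
next
  case (Cons p ps)
  have p: "p \<in> P - A" using Cons.prems by simp
  show ?case
  proof (cases ps)
    case Nil
    have "L b \<le> mval L x p" using p Cons.prems Nil assms
      by (intro mval_ge) (auto simp: msetv_def)
    then show ?thesis using p Nil by (simp add: phi_def)
  next
    case (Cons q qs)
    have IH: "sum_list (map (phi L x) ps) \<le> x q - L b"
      using Cons.IH Cons.prems Cons by simp
    have q: "q \<in> P - A" "lt q p" using Cons.prems Cons by auto
    have "x q \<le> mval L x p" using p q by (intro mval_ge) (auto simp: msetv_def)
    then show ?thesis using IH p by (simp add: phi_def)
  qed
qed

lemma phi_ch: assumes "ordP L x" shows "chP L (phi L x)"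
proof -
  have "0 \<le> phi L x p" if "p \<in> P - A" for p
    using mval_le[OF assms that] that by (simp add: phi_def)
  moreover have "sum_list (map (phi L x) ps) \<le> L a - L b"
    if "a \<in> A" "b \<in> A" "ps \<noteq> []" "set ps \<subseteq> P - A" "sorted_wrt (\<lambda>u v. lt v u) ps"
       "lt b (last ps)" "lt (hd ps) a" for a b ps
  proof -
    have "sum_list (map (phi L x) ps) \<le> x (hd ps) - L b"
      using chain_bound[OF assms that(2)] that by blast
    moreover have "hd ps \<in> P - A" using that hd_in_set by blast
    then have "x (hd ps) \<le> L a" using assms that unfolding ordP_def by blast
    ultimately show ?thesis by simp
  qed
  ultimately show ?thesis unfolding chP_def phi_def by auto
qed

end


context mpos begin

definition R :: "('a \<times> 'a) set" where
  "R = {(q,p). q \<in> P - A \<and> p \<in> P - A \<and> lt q p}"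

lemma wfR: "wf R"
proof (rule finite_acyclic_wf)
  have "R \<subseteq> (P - A) \<times> (P - A)" unfolding R_def by auto
  then show "finite R" using finP finite_subset by blast
  have "trans R" unfolding R_def by (rule transI) (auto intro: trans)
  then have "R\<^sup>+ = R" by simp
  then show "acyclic R" unfolding acyclic_def R_def using irr by auto
qed

definition Hf :: "('a \<Rightarrow> real) \<Rightarrow> ('a \<Rightarrow> real) \<Rightarrow> ('a \<Rightarrow> real) \<Rightarrow> 'a \<Rightarrow> real" where
  "Hf y L f p = y p + Max (L ` {b\<in>A. lt b p} \<union> f ` {q\<in>P - A. lt q p})"

definition psi :: "('a \<Rightarrow> real) \<Rightarrow> ('a \<Rightarrow> real) \<Rightarrow> 'a \<Rightarrow> real" where
  "psi L y = (\<lambda>p. if p \<in> P - A then wfrec R (Hf y L) p else 0)"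

lemma psi_eq: assumes "p \<in> P - A" shows "psi L y p = y p + mval L (psi L y) p"
proof -
  have "psi L y p = Hf y L (cut (wfrec R (Hf y L)) R p) p"
    using assms wfrec[OF wfR] by (simp add: psi_def)
  also have "cut (wfrec R (Hf y L)) R p ` {q\<in>P - A. lt q p} = psi L y ` {q\<in>P - A. lt q p}"
    using assms by (intro image_cong) (auto simp: cut_apply R_def psi_def)
  then have "Hf y L (cut (wfrec R (Hf y L)) R p) p = y p + mval L (psi L y) p"
    unfolding Hf_def mval_def msetv_def by simp
  finally show ?thesis .
qed

lemma psi_chain:
  "p \<in> P - A \<longrightarrow> (\<exists>b ps. b \<in> A \<and> ps \<noteq> [] \<and> hd ps = p \<and> set ps \<subseteq> P - A \<and>
      sorted_wrt (\<lambda>u v. lt v u) ps \<and> lt b (last ps) \<and> psi L y p = L b + sum_list (map y ps))"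
proof (induction p rule: wf_induct[OF wfR])
  case (1 p)
  show ?case
  proof
    assume p: "p \<in> P - A"
    have "mval L (psi L y) p \<in> msetv L (psi L y) p" using mval_in[OF p] .
    then consider (a) b where "b \<in> A" "lt b p" "mval L (psi L y) p = L b"
      | (b) q where "q \<in> P - A" "lt q p" "mval L (psi L y) p = psi L y q"
      unfolding msetv_def by auto
    then show "\<exists>b ps. b \<in> A \<and> ps \<noteq> [] \<and> hd ps = p \<and> set ps \<subseteq> P - A \<and>
      sorted_wrt (\<lambda>u v. lt v u) ps \<and> lt b (last ps) \<and> psi L y p = L b + sum_list (map y ps)"
    proof cases
      case a
      then show ?thesis using p psi_eq[OF p] by (intro exI[of _ b] exI[of _ "[p]"]) auto
    next
      case b
      have "(q, p) \<in> R" using b p unfolding R_def by auto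
      with 1 b obtain c ps where c: "c \<in> A" "ps \<noteq> []" "hd ps = q" "set ps \<subseteq> P - A"
        "sorted_wrt (\<lambda>u v. lt v u) ps" "lt c (last ps)" "psi L y q = L c + sum_list (map y ps)"
        by blast
      have "\<forall>r\<in>set ps. lt r p"
      proof
        fix r assume r: "r \<in> set ps"
        obtain rs where ps: "ps = q # rs" using c(2,3) by (cases ps) auto
        show "lt r p"
        proof (cases "r = q")
          case True thus ?thesis using b by simp
        next
          case False
          then have "r \<in> set rs" using r ps by simp
          then have "lt r q" using c(5) ps by simp
          then show ?thesis using trans[of r q p] b p r c(4) by auto
        qed
      qed
      then show ?thesis using c p psi_eq[OF p] b
        by (intro exI[of _ c] exI[of _ "p # ps"]) auto
    qed
  qed
qed

lemma psi_ord: assumes "chP L y" shows "ordP L (psi L y)"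
proof -
  have y0: "\<forall>p\<in>P - A. 0 \<le> y p" using assms unfolding chP_def by blast
  have mono: "psi L y p \<le> psi L y q" if "p \<in> P - A" "q \<in> P - A" "lt p q" for p q
  proof -
    have "psi L y p \<le> mval L (psi L y) q" using that by (intro mval_ge) (auto simp: msetv_def)
    moreover have "0 \<le> y q" using y0 that(2) by blast
    ultimately show ?thesis using psi_eq[OF that(2), of L y] by linarith
  qed
  have lo: "L b \<le> psi L y q" if "b \<in> A" "q \<in> P - A" "lt b q" for b q
  proof -
    have "L b \<le> mval L (psi L y) q" using that by (intro mval_ge) (auto simp: msetv_def)
    moreover have "0 \<le> y q" using y0 that(2) by blast
    ultimately show ?thesis using psi_eq[OF that(2), of L y] by linarith
  qed
  have hi: "psi L y p \<le> L a" if h: "p \<in> P - A" "a \<in> A" "lt p a" for p a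
  proof -
    obtain b ps where c: "b \<in> A" "ps \<noteq> []" "hd ps = p" "set ps \<subseteq> P - A"
      "sorted_wrt (\<lambda>u v. lt v u) ps" "lt b (last ps)" "psi L y p = L b + sum_list (map y ps)"
      using psi_chain[of p L y] h(1) by blast
    have "sum_list (map y ps) \<le> L a - L b"
      using assms c h unfolding chP_def by blast
    then show ?thesis using c by simp
  qed
  show ?thesis unfolding ordP_def using mono lo hi by (auto simp: psi_def)
qed

lemma phi_psi: assumes "chP L y" shows "phi L (psi L y) = y"
proof
  fix p show "phi L (psi L y) p = y p"
    using assms psi_eq[of p L y] unfolding phi_def chP_def by auto
qed

lemma psi_int: assumes "\<forall>p. y p \<in> \<int>" "\<forall>a\<in>A. L a \<in> \<int>" shows "psi L y p \<in> \<int>"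
proof (cases "p \<in> P - A")
  case True
  then obtain b ps where c: "b \<in> A" "psi L y p = L b + sum_list (map y ps)"
    using psi_chain[of p L y] by blast
  have "sum_list (map y ps) \<in> \<int>"
    by (induction ps) (use assms in auto)
  then show ?thesis using c assms by simp
next
  case False then show ?thesis by (auto simp: psi_def)
qed

end


lemma sum_list_sum_swap:
  "sum_list (map (\<lambda>p. \<Sum>k\<in>K. f k p) ps) = (\<Sum>k\<in>K. sum_list (map (f k) ps))"
  by (induction ps) (simp_all add: sum.distrib)

lemma mp_sum: "(\<forall>k<n. z k \<in> S) \<Longrightarrow> (\<lambda>p. \<Sum>k<n. z k p) \<in> minkowski_power S n"
proof (induction n)
  case 0 then show ?case by (simp add: zero_fun_def)
next
  case (Suc n)
  have "(\<lambda>p. \<Sum>k<Suc n. z k p) = (\<lambda>p. \<Sum>k<n. z k p) + z n" by (simp add: plus_fun_def)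
  then show ?case using Suc by auto
qed

lemma mp_sum_rev: "y \<in> minkowski_power S n \<Longrightarrow> \<exists>z. (\<forall>k<n. z k \<in> S) \<and> y = (\<lambda>p. \<Sum>k<n. z k p)"
proof (induction n arbitrary: y)
  case 0 then show ?case by (simp add: zero_fun_def)
next
  case (Suc n)
  then obtain y' z' where y: "y = y' + z'" "y' \<in> minkowski_power S n" "z' \<in> S" by auto
  from Suc.IH[OF y(2)] obtain z where z: "\<forall>k<n. z k \<in> S" "y' = (\<lambda>p. \<Sum>k<n. z k p)" by blast
  define z2 where "z2 = z(n := z')"
  have "\<forall>k<Suc n. z2 k \<in> S" using z y unfolding z2_def by (auto simp: less_Suc_eq)
  moreover have "y = (\<lambda>p. \<Sum>k<Suc n. z2 k p)"
  proof
    fix p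
    have "(\<Sum>k<n. z2 k p) = (\<Sum>k<n. z k p)" unfolding z2_def by (rule sum.cong) auto
    then show "y p = (\<Sum>k<Suc n. z2 k p)" using y z unfolding z2_def by (simp add: plus_fun_def)
  qed
  ultimately show ?case by blast
qed

lemma lattice_generic:
  fixes Q :: "('a \<Rightarrow> real) set"
  assumes conv: "\<And>(K::('a \<Rightarrow> real) set) u z. finite K \<Longrightarrow> (\<forall>k\<in>K. 0 \<le> u k \<and> z k \<in> Q) \<Longrightarrow> sum u K = 1 \<Longrightarrow> (\<lambda>p. \<Sum>k\<in>K. u k * z k p) \<in> Q"
    and fin: "finite (lattice_points Q)"
    and dec: "\<And>x. x \<in> Q \<Longrightarrow> \<exists>(K::real set) w z. finite K \<and> (\<forall>k\<in>K. 0 \<le> w k \<and> z k \<in> lattice_points Q) \<and> sum w K = 1 \<and> x = (\<lambda>p. \<Sum>k\<in>K. w k * z k p)"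
  shows "lattice_polytope Q"
  unfolding lattice_polytope_def
proof (intro conjI fin set_eqI iffI)
  fix x assume "x \<in> {x. \<exists>S u. finite S \<and> S \<subseteq> lattice_points Q \<and> (\<forall>s\<in>S. 0 \<le> u s) \<and> sum u S = 1 \<and> x = (\<lambda>p. \<Sum>s\<in>S. u s * s p)}"
  then obtain S u where "finite S" "S \<subseteq> lattice_points Q" "\<forall>s\<in>S. 0 \<le> u s" "sum u S = 1" "x = (\<lambda>p. \<Sum>s\<in>S. u s * s p)"
    by blast
  note S = this
  have "(\<lambda>p. \<Sum>s\<in>S. u s * s p) \<in> Q"
    by (rule conv) (use S in \<open>auto simp: lattice_points_def\<close>)
  then show "x \<in> Q" using S(5) by simp
next
  fix x assume "x \<in> Q"
  from dec[OF this] obtain K w z where K: "finite (K::real set)" "\<forall>k\<in>K. 0 \<le> w k \<and> z k \<in> lattice_points Q"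
    "sum w K = 1" "x = (\<lambda>p. \<Sum>k\<in>K. w k * z k p)" by blast
  define u where "u s = sum w {k\<in>K. z k = s}" for s
  have "finite (z ` K)" "z ` K \<subseteq> lattice_points Q" using K by auto
  moreover have "\<forall>s\<in>z ` K. 0 \<le> u s" unfolding u_def using K by (auto intro: sum_nonneg)
  moreover have "sum u (z ` K) = 1" unfolding u_def using sum.image_gen[OF K(1), of w z] K(3) by simp
  moreover have "x = (\<lambda>p. \<Sum>s\<in>z ` K. u s * s p)"
  proof
    fix p
    have "(\<Sum>s\<in>z ` K. u s * s p) = (\<Sum>s\<in>z ` K. \<Sum>k\<in>{k\<in>K. z k = s}. w k * z k p)"
      unfolding u_def by (rule sum.cong) (auto simp: sum_distrib_right)
    also have "\<dots> = (\<Sum>k\<in>K. w k * z k p)" using sum.image_gen[OF K(1), of "\<lambda>k. w k * z k p" z] by simp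
    finally show "x p = (\<Sum>s\<in>z ` K. u s * s p)" using K(4) by simp
  qed
  ultimately show "x \<in> {x. \<exists>S u. finite S \<and> S \<subseteq> lattice_points Q \<and> (\<forall>s\<in>S. 0 \<le> u s) \<and> sum u S = 1 \<and> x = (\<lambda>p. \<Sum>s\<in>S. u s * s p)}"
    by blast
qed

lemma normal_generic:
  fixes Q :: "('a \<Rightarrow> real) set"
  assumes conv: "\<And>(K::nat set) u z. finite K \<Longrightarrow> (\<forall>k\<in>K. 0 \<le> u k \<and> z k \<in> Q) \<Longrightarrow> sum u K = 1 \<Longrightarrow> (\<lambda>p. \<Sum>k\<in>K. u k * z k p) \<in> Q"
    and dec: "\<And>n x. n \<ge> 1 \<Longrightarrow> x \<in> lattice_points (dilate n Q) \<Longrightarrow> \<exists>z. (\<forall>k<n. z k \<in> lattice_points Q) \<and> x = (\<lambda>p. \<Sum>k<n. z k p)"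
  shows "normal_polytope Q"
  unfolding normal_polytope_def
proof (intro allI impI set_eqI iffI)
  fix n :: nat and x assume n: "n \<ge> 1" and "x \<in> lattice_points (dilate n Q)"
  from dec[OF this] show "x \<in> minkowski_power (lattice_points Q) n" using mp_sum by blast
next
  fix n :: nat and x assume n: "n \<ge> 1" and "x \<in> minkowski_power (lattice_points Q) n"
  from mp_sum_rev[OF this(2)] obtain z where z: "\<forall>k<n. z k \<in> lattice_points Q" "x = (\<lambda>p. \<Sum>k<n. z k p)"
    by blast
  have "(\<lambda>p. \<Sum>k\<in>{..<n}. (1 / real n) * z k p) \<in> Q"
  proof (rule conv)
    show "\<forall>k\<in>{..<n}. 0 \<le> 1 / real n \<and> z k \<in> Q" using z unfolding lattice_points_def by auto
    show "(\<Sum>k\<in>{..<n}. 1 / real n) = 1" using n by simp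
  qed simp
  moreover have "x = (\<lambda>p. real n * (\<Sum>k\<in>{..<n}. (1 / real n) * z k p))"
    using z(2) n by (simp add: sum_divide_distrib[symmetric])
  ultimately have "x \<in> dilate n Q" unfolding dilate_def
    by (intro CollectI exI[where x="\<lambda>p. \<Sum>k\<in>{..<n}. (1 / real n) * z k p"]) simp
  moreover have "x p \<in> \<int>" for p
    using z unfolding lattice_points_def by (auto intro: Ints_sum)
  ultimately show "x \<in> lattice_points (dilate n Q)" unfolding lattice_points_def by blast
qed

context mpos begin

definition hmap :: "(real \<Rightarrow> real) \<Rightarrow> ('a \<Rightarrow> real) \<Rightarrow> 'a \<Rightarrow> real" where
  "hmap h x = (\<lambda>p. if p \<in> P - A then h (x p) else 0)"

lemma hmap_ord:
  assumes "ordP L' x" "mono h" "\<forall>a\<in>A. h (L' a) = L a"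
  shows "ordP L (hmap h x)"
proof -
  have 1: "\<forall>p\<in>P - A. \<forall>q\<in>P - A. lt p q \<longrightarrow> h (x p) \<le> h (x q)"
    using assms(1,2) unfolding ordP_def by (auto intro: monoD)
  have 2: "\<forall>p\<in>P - A. \<forall>a\<in>A. lt p a \<longrightarrow> h (x p) \<le> L a"
    using assms unfolding ordP_def by (metis monoD)
  have 3: "\<forall>b\<in>A. \<forall>q\<in>P - A. lt b q \<longrightarrow> L b \<le> h (x q)"
    using assms unfolding ordP_def by (metis monoD)
  show ?thesis unfolding ordP_def hmap_def using 1 2 3 by auto
qed

lemma mval_hmap:
  assumes "mono h" "\<forall>a\<in>A. h (L' a) = L a" "p \<in> P - A"
  shows "mval L (hmap h x) p = h (mval L' x p)"
proof -
  have "msetv L (hmap h x) p = h ` msetv L' x p"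
    unfolding msetv_def hmap_def image_Un image_image using assms(2)
    by (intro arg_cong2[where f="(\<union>)"] image_cong) auto
  then show ?thesis unfolding mval_def
    using mono_Max_commute[OF assms(1) msetv_fin msetv_ne[OF assms(3)]] by simp
qed

lemma decomp:
  assumes x: "ordP L' x" and K: "finite K" and mono: "\<forall>k\<in>K. mono (h k)"
    and hL: "\<forall>k\<in>K. \<forall>a\<in>A. h k (L' a) = L a"
    and id: "\<forall>v\<in>x ` (P - A) \<union> L' ` A. (\<Sum>k\<in>K. w k * h k v) = v"
  shows "x = (\<lambda>p. \<Sum>k\<in>K. w k * hmap (h k) x p)"
    and "phi L' x = (\<lambda>p. \<Sum>k\<in>K. w k * phi L (hmap (h k) x) p)"
proof -
  show "x = (\<lambda>p. \<Sum>k\<in>K. w k * hmap (h k) x p)"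
  proof
    fix p show "x p = (\<Sum>k\<in>K. w k * hmap (h k) x p)"
      using id x unfolding hmap_def ordP_def by (cases "p \<in> P - A") auto
  qed
  show "phi L' x = (\<lambda>p. \<Sum>k\<in>K. w k * phi L (hmap (h k) x) p)"
  proof
    fix p show "phi L' x p = (\<Sum>k\<in>K. w k * phi L (hmap (h k) x) p)"
    proof (cases "p \<in> P - A")
      case True
      have m: "mval L' x p \<in> x ` (P - A) \<union> L' ` A"
        using mval_in[OF True, of L' x] unfolding msetv_def by auto
      have "(\<Sum>k\<in>K. w k * phi L (hmap (h k) x) p) = (\<Sum>k\<in>K. w k * h k (x p) - w k * h k (mval L' x p))"
        using True mval_hmap[OF _ _ True] mono hL
        by (intro sum.cong) (auto simp: phi_def hmap_def right_diff_distrib)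
      also have "\<dots> = x p - mval L' x p"
        using id m True by (simp add: sum_subtractf)
      finally show ?thesis using True by (simp add: phi_def)
    qed (auto simp add: phi_def)
  qed
qed

lemma hmap_int: "(\<forall>v. h v \<in> \<int>) \<Longrightarrow> hmap h x p \<in> \<int>"
  unfolding hmap_def by auto

lemma phi_int: assumes "\<forall>p. x p \<in> \<int>" "\<forall>a\<in>A. L a \<in> \<int>" shows "phi L x p \<in> \<int>"
proof (cases "p \<in> P - A")
  case True
  have "mval L x p \<in> \<int>" using mval_in[OF True, of L x] assms unfolding msetv_def by auto
  then show ?thesis using True assms by (simp add: phi_def)
qed (auto simp add: phi_def)

lemma ordP_convex:
  assumes "finite K" "\<forall>k\<in>K. 0 \<le> u k \<and> ordP L (z k)" "sum u K = 1"
  shows "ordP L (\<lambda>p. \<Sum>k\<in>K. u k * z k p)"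
proof -
  have 1: "(\<Sum>k\<in>K. u k * z k p) \<le> (\<Sum>k\<in>K. u k * z k q)" if "p \<in> P - A" "q \<in> P - A" "lt p q" for p q
    using assms that unfolding ordP_def by (intro sum_mono mult_left_mono) auto
  have 2: "(\<Sum>k\<in>K. u k * z k p) \<le> L a" if "p \<in> P - A" "a \<in> A" "lt p a" for p a
  proof -
    have "(\<Sum>k\<in>K. u k * z k p) \<le> (\<Sum>k\<in>K. u k * L a)"
      using assms that unfolding ordP_def by (intro sum_mono mult_left_mono) auto
    then show ?thesis using assms(3) by (simp add: sum_distrib_right[symmetric])
  qed
  have 3: "L b \<le> (\<Sum>k\<in>K. u k * z k q)" if "b \<in> A" "q \<in> P - A" "lt b q" for b q
  proof -
    have "(\<Sum>k\<in>K. u k * L b) \<le> (\<Sum>k\<in>K. u k * z k q)"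
      using assms that unfolding ordP_def by (intro sum_mono mult_left_mono) auto
    then show ?thesis using assms(3) by (simp add: sum_distrib_right[symmetric])
  qed
  have 0: "(\<Sum>k\<in>K. u k * z k p) = 0" if "p \<notin> P - A" for p
    using assms that unfolding ordP_def by simp
  show ?thesis unfolding ordP_def using 0 1 2 3 by blast
qed

lemma chP_convex:
  assumes "finite K" "\<forall>k\<in>K. 0 \<le> u k \<and> chP L (z k)" "sum u K = 1"
  shows "chP L (\<lambda>p. \<Sum>k\<in>K. u k * z k p)"
proof -
  have 1: "0 \<le> (\<Sum>k\<in>K. u k * z k p)" if "p \<in> P - A" for p
    using assms that unfolding chP_def by (intro sum_nonneg) auto
  have 2: "sum_list (map (\<lambda>p. \<Sum>k\<in>K. u k * z k p) ps) \<le> L a - L b"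
    if h: "a \<in> A" "b \<in> A" "ps \<noteq> [] \<and> set ps \<subseteq> P - A \<and> sorted_wrt (\<lambda>u v. lt v u) ps \<and> lt b (last ps) \<and> lt (hd ps) a" for a b ps
  proof -
    have "sum_list (map (\<lambda>p. \<Sum>k\<in>K. u k * z k p) ps) = (\<Sum>k\<in>K. u k * sum_list (map (z k) ps))"
      by (simp add: sum_list_sum_swap sum_list_const_mult)
    also have "\<dots> \<le> (\<Sum>k\<in>K. u k * (L a - L b))"
      using assms h unfolding chP_def by (intro sum_mono mult_left_mono) auto
    also have "\<dots> = L a - L b" using assms(3) by (simp add: sum_distrib_right[symmetric])
    finally show ?thesis .
  qed
  have 0: "(\<Sum>k\<in>K. u k * z k p) = 0" if "p \<notin> P - A" for p
    using assms that unfolding chP_def by simp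
  show ?thesis unfolding chP_def using 0 1 2 by blast
qed

end


lemma floor_nat_t: "0 \<le> t \<Longrightarrow> t < 1 \<Longrightarrow> real_of_int \<lfloor>real m + t\<rfloor> = real m"
proof -
  assume "0 \<le> t" "t < 1"
  then have "\<lfloor>real m + t\<rfloor> = int m" unfolding floor_eq_iff by simp
  then show ?thesis by simp
qed

lemma floor_div_nat:
  assumes "k < n" shows "real_of_int \<lfloor>(real n * real l + real k) / real n\<rfloor> = real l"
proof -
  have n: "real n > 0" using assms by simp
  have "(real n * real l + real k) / real n = real l + real k / real n" using n by (simp add: field_simps)
  moreover have "0 \<le> real k / real n" "real k / real n < 1" using assms n by auto
  ultimately show ?thesis using floor_nat_t by simp
qed

lemma mono_floor_shift: "mono (\<lambda>v::real. real_of_int \<lfloor>v + t\<rfloor>)"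
  by (rule monoI) (simp add: floor_mono)

lemma mono_floor_div: "mono (\<lambda>v::real. real_of_int \<lfloor>(v + real k) / real n\<rfloor>)"
  by (rule monoI) (simp add: floor_mono divide_right_mono)

context mpos begin

lemma O_eq: "marked_order_polytope P lt A lam = {x. ordP (\<lambda>a. real (lam a)) x}"
  unfolding marked_order_polytope_def ordP_def by simp

lemma C_eq: "marked_chain_polytope P lt A lam = {x. chP (\<lambda>a. real (lam a)) x}"
  unfolding marked_chain_polytope_def chP_def by simp

lemma dil_O:
  assumes "n \<ge> 1" shows "dilate n {x. ordP L x} = {x. ordP (\<lambda>a. real n * L a) x}"
proof (intro set_eqI iffI)
  fix x assume "x \<in> dilate n {x. ordP L x}"
  then obtain y where y: "x = (\<lambda>p. real n * y p)" "ordP L y" unfolding dilate_def by blast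
  then show "x \<in> {x. ordP (\<lambda>a. real n * L a) x}"
    unfolding ordP_def by (auto intro: mult_left_mono)
next
  fix x assume x: "x \<in> {x. ordP (\<lambda>a. real n * L a) x}"
  have n: "real n > 0" using assms by simp
  define y where "y p = x p / real n" for p
  have "ordP L y" using x n unfolding ordP_def y_def
    by (auto simp: pos_divide_le_eq pos_le_divide_eq mult.commute)
  moreover have "x = (\<lambda>p. real n * y p)" using n unfolding y_def by auto
  ultimately show "x \<in> dilate n {x. ordP L x}" unfolding dilate_def by blast
qed

lemma dil_C:
  assumes "n \<ge> 1" shows "dilate n {x. chP L x} = {x. chP (\<lambda>a. real n * L a) x}"
proof (intro set_eqI iffI)
  fix x assume "x \<in> dilate n {x. chP L x}"
  then obtain y where y: "x = (\<lambda>p. real n * y p)" "chP L y" unfolding dilate_def by blast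
  then show "x \<in> {x. chP (\<lambda>a. real n * L a) x}"
    unfolding chP_def by (auto simp: sum_list_const_mult right_diff_distrib[symmetric] intro: mult_left_mono)
next
  fix x assume x: "x \<in> {x. chP (\<lambda>a. real n * L a) x}"
  have n: "real n > 0" using assms by simp
  define y where "y p = x p / real n" for p
  have sy: "sum_list (map y ps) = sum_list (map x ps) / real n" for ps
    unfolding y_def by (induction ps) (simp_all add: add_divide_distrib)
  have c: "sum_list (map x ps) \<le> real n * (L a - L b)"
    if "a \<in> A" "b \<in> A" "ps \<noteq> [] \<and> set ps \<subseteq> P - A \<and> sorted_wrt (\<lambda>u v. lt v u) ps \<and> lt b (last ps) \<and> lt (hd ps) a" for a b ps
    using x that unfolding chP_def right_diff_distrib by blast
  have c2: "sum_list (map y ps) \<le> L a - L b"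
    if "a \<in> A" "b \<in> A" "ps \<noteq> [] \<and> set ps \<subseteq> P - A \<and> sorted_wrt (\<lambda>u v. lt v u) ps \<and> lt b (last ps) \<and> lt (hd ps) a" for a b ps
    using c[OF that] n unfolding sy by (simp add: pos_divide_le_eq mult.commute)
  have z: "\<forall>p. p \<notin> P - A \<longrightarrow> y p = 0" "\<forall>p\<in>P - A. 0 \<le> y p"
    using x n unfolding chP_def y_def by auto
  have "chP L y" unfolding chP_def using z c2 by blast
  moreover have "x = (\<lambda>p. real n * y p)" using n unfolding y_def by auto
  ultimately show "x \<in> dilate n {x. chP L x}" unfolding dilate_def by blast
qed

lemma fin_lat_gen:
  assumes "\<forall>x\<in>Q. \<forall>p. p \<notin> P - A \<longrightarrow> x p = 0" "\<forall>x\<in>Q. \<forall>p\<in>P - A. 0 \<le> x p \<and> x p \<le> M"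
  shows "finite (lattice_points Q)"
proof -
  define Z where "Z = real_of_int ` {0..\<lceil>M\<rceil>}"
  define F where "F f = (\<lambda>p. if p \<in> P - A then f p else 0)" for f :: "'a \<Rightarrow> real"
  have "lattice_points Q \<subseteq> F ` (PiE (P - A) (\<lambda>_. Z))"
  proof
    fix x assume x: "x \<in> lattice_points Q"
    have "restrict x (P - A) \<in> PiE (P - A) (\<lambda>_. Z)"
    proof (subst restrict_PiE_iff, intro ballI)
      fix p assume p: "p \<in> P - A"
      have "x p \<in> \<int>" using x unfolding lattice_points_def by auto
      then obtain m where m: "x p = real_of_int m" by (auto elim: Ints_cases)
      have "0 \<le> x p" "x p \<le> M" using assms x p unfolding lattice_points_def by auto
      then have "m \<in> {0..\<lceil>M\<rceil>}" using m by (auto simp: le_ceiling_iff)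
      then show "x p \<in> Z" unfolding Z_def using m by auto
    qed
    moreover have "x = F (restrict x (P - A))"
      using assms x unfolding F_def lattice_points_def by (auto simp: restrict_def)
    ultimately show "x \<in> F ` (PiE (P - A) (\<lambda>_. Z))" by blast
  qed
  moreover have "finite (PiE (P - A) (\<lambda>_. Z))"
    unfolding Z_def using finP by (intro finite_PiE) auto
  ultimately show ?thesis using finite_subset by blast
qed

abbreviation "LL lam \<equiv> (\<lambda>a. real (lam a))"

lemma lam_le: assumes "a \<in> A" shows "real (lam a) \<le> real (\<Sum>a\<in>A. lam a)"
proof -
  have "lam a \<le> (\<Sum>a\<in>A. lam a)" using finA assms by (intro member_le_sum) auto
  then show ?thesis by (simp only: of_nat_le_iff)
qed

lemma O_fin: "finite (lattice_points {x. ordP (LL lam) x})"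
proof (rule fin_lat_gen[where M="real (\<Sum>a\<in>A. lam a)"])
  show "\<forall>x\<in>{x. ordP (LL lam) x}. \<forall>p. p \<notin> P - A \<longrightarrow> x p = 0" unfolding ordP_def by auto
  show "\<forall>x\<in>{x. ordP (LL lam) x}. \<forall>p\<in>P - A. 0 \<le> x p \<and> x p \<le> real (\<Sum>a\<in>A. lam a)"
  proof (intro ballI)
    fix x p assume x: "x \<in> {x. ordP (LL lam) x}" and p: "p \<in> P - A"
    obtain b where b: "b \<in> A" "lt b p" using belowI p by blast
    obtain a where a: "a \<in> A" "lt p a" using aboveI p by blast
    have "real (lam b) \<le> x p" "x p \<le> real (lam a)" using x a b p unfolding ordP_def by auto
    moreover have "0 \<le> real (lam b)" by simp
    ultimately show "0 \<le> x p \<and> x p \<le> real (\<Sum>a\<in>A. lam a)" using lam_le[of a lam] a(1) by linarith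
  qed
qed

lemma C_fin: "finite (lattice_points {x. chP (LL lam) x})"
proof (rule fin_lat_gen[where M="real (\<Sum>a\<in>A. lam a)"])
  show "\<forall>x\<in>{x. chP (LL lam) x}. \<forall>p. p \<notin> P - A \<longrightarrow> x p = 0" unfolding chP_def by auto
  show "\<forall>x\<in>{x. chP (LL lam) x}. \<forall>p\<in>P - A. 0 \<le> x p \<and> x p \<le> real (\<Sum>a\<in>A. lam a)"
  proof (intro ballI)
    fix x p assume x: "x \<in> {x. chP (LL lam) x}" and p: "p \<in> P - A"
    obtain b where b: "b \<in> A" "lt b p" using belowI p by blast
    obtain a where a: "a \<in> A" "lt p a" using aboveI p by blast
    have H: "\<forall>ps. ps \<noteq> [] \<and> set ps \<subseteq> P - A \<and> sorted_wrt (\<lambda>u v. lt v u) ps \<and> lt b (last ps) \<and> lt (hd ps) a \<longrightarrow> sum_list (map x ps) \<le> real (lam a) - real (lam b)"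
      using x a(1) b(1) unfolding chP_def by blast
    have "sum_list (map x [p]) \<le> real (lam a) - real (lam b)"
      using H[rule_format, of "[p]"] a b p by simp
    moreover have "0 \<le> x p" using x p unfolding chP_def by auto
    moreover have "0 \<le> real (lam b)" by simp
    ultimately show "0 \<le> x p \<and> x p \<le> real (\<Sum>a\<in>A. lam a)" using lam_le[of a lam] a(1) by simp
  qed
qed

lemma ints_LL: "\<forall>a\<in>A. LL lam a \<in> \<int>" by auto

lemma O_lattice: "lattice_polytope {x. ordP (LL lam) x}"
proof (rule lattice_generic)
  show "finite (lattice_points {x. ordP (LL lam) x})" by (rule O_fin)
  show "(\<lambda>p. \<Sum>k\<in>K. u k * z k p) \<in> {x. ordP (LL lam) x}"
    if "finite K" "\<forall>k\<in>K. 0 \<le> u k \<and> z k \<in> {x. ordP (LL lam) x}" "sum u K = 1" for K :: "('a \<Rightarrow> real) set" and u z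
    using ordP_convex[of K u "LL lam" z] that by auto
  fix x assume "x \<in> {x. ordP (LL lam) x}"
  then have x: "ordP (LL lam) x" by simp
  have "finite (x ` (P - A) \<union> LL lam ` A)" using finP finA by simp
  from thresholds[OF this] obtain T w where T: "finite T" "\<forall>t\<in>T. 0 \<le> t \<and> t < 1 \<and> 0 \<le> w t"
    "sum w T = 1" "\<forall>v\<in>x ` (P - A) \<union> LL lam ` A. (\<Sum>t\<in>T. w t * real_of_int \<lfloor>v + t\<rfloor>) = v" by blast
  define h where "h t = (\<lambda>v::real. real_of_int \<lfloor>v + t\<rfloor>)" for t
  have hm: "\<forall>t\<in>T. mono (h t)" unfolding h_def using mono_floor_shift by blast
  have hL: "\<forall>t\<in>T. \<forall>a\<in>A. h t (LL lam a) = LL lam a" unfolding h_def using T(2) floor_nat_t by blast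
  have dec: "x = (\<lambda>p. \<Sum>t\<in>T. w t * hmap (h t) x p)"
    by (rule decomp(1)[OF x T(1) hm hL]) (use T(4) h_def in simp)
  have zl: "\<forall>t\<in>T. 0 \<le> w t \<and> hmap (h t) x \<in> lattice_points {x. ordP (LL lam) x}"
  proof
    fix t assume t: "t \<in> T"
    have "mono (h t)" using hm t by blast
    moreover have "\<forall>a\<in>A. h t (LL lam a) = LL lam a" using hL t by blast
    ultimately have "ordP (LL lam) (hmap (h t) x)" by (rule hmap_ord[OF x])
    moreover have "\<forall>p. hmap (h t) x p \<in> \<int>" by (intro allI hmap_int) (simp add: h_def)
    ultimately show "0 \<le> w t \<and> hmap (h t) x \<in> lattice_points {x. ordP (LL lam) x}"
      unfolding lattice_points_def using T(2) t by blast
  qed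
  show "\<exists>(K::real set) w z. finite K \<and> (\<forall>k\<in>K. 0 \<le> w k \<and> z k \<in> lattice_points {x. ordP (LL lam) x}) \<and> sum w K = 1 \<and> x = (\<lambda>p. \<Sum>k\<in>K. w k * z k p)"
    by (intro exI[of _ T] exI[of _ w] exI[of _ "\<lambda>t. hmap (h t) x"] conjI T(1) T(3) zl dec)
qed

end


context mpos begin

lemma C_lattice: "lattice_polytope {x. chP (LL lam) x}"
proof (rule lattice_generic)
  show "finite (lattice_points {x. chP (LL lam) x})" by (rule C_fin)
  show "(\<lambda>p. \<Sum>k\<in>K. u k * z k p) \<in> {x. chP (LL lam) x}"
    if "finite K" "\<forall>k\<in>K. 0 \<le> u k \<and> z k \<in> {x. chP (LL lam) x}" "sum u K = 1" for K :: "('a \<Rightarrow> real) set" and u z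
    using chP_convex[of K u "LL lam" z] that by auto
  fix y assume "y \<in> {x. chP (LL lam) x}"
  then have y: "chP (LL lam) y" by simp
  define x where "x = psi (LL lam) y"
  have x: "ordP (LL lam) x" unfolding x_def by (rule psi_ord[OF y])
  have yx: "y = phi (LL lam) x" unfolding x_def by (rule phi_psi[OF y, symmetric])
  have "finite (x ` (P - A) \<union> LL lam ` A)" using finP finA by simp
  from thresholds[OF this] obtain T w where T: "finite T" "\<forall>t\<in>T. 0 \<le> t \<and> t < 1 \<and> 0 \<le> w t"
    "sum w T = 1" "\<forall>v\<in>x ` (P - A) \<union> LL lam ` A. (\<Sum>t\<in>T. w t * real_of_int \<lfloor>v + t\<rfloor>) = v" by blast
  define h where "h t = (\<lambda>v::real. real_of_int \<lfloor>v + t\<rfloor>)" for t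
  have hm: "\<forall>t\<in>T. mono (h t)" unfolding h_def using mono_floor_shift by blast
  have hL: "\<forall>t\<in>T. \<forall>a\<in>A. h t (LL lam a) = LL lam a" unfolding h_def using T(2) floor_nat_t by blast
  have dec: "y = (\<lambda>p. \<Sum>t\<in>T. w t * phi (LL lam) (hmap (h t) x) p)"
    unfolding yx by (rule decomp(2)[OF x T(1) hm hL]) (use T(4) h_def in simp)
  have zl: "\<forall>t\<in>T. 0 \<le> w t \<and> phi (LL lam) (hmap (h t) x) \<in> lattice_points {x. chP (LL lam) x}"
  proof
    fix t assume t: "t \<in> T"
    have "mono (h t)" using hm t by blast
    moreover have "\<forall>a\<in>A. h t (LL lam a) = LL lam a" using hL t by blast
    ultimately have "ordP (LL lam) (hmap (h t) x)" by (rule hmap_ord[OF x])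
    then have "chP (LL lam) (phi (LL lam) (hmap (h t) x))" by (rule phi_ch)
    moreover have "\<forall>p. hmap (h t) x p \<in> \<int>" by (intro allI hmap_int) (simp add: h_def)
    then have "\<forall>p. phi (LL lam) (hmap (h t) x) p \<in> \<int>" using phi_int[OF _ ints_LL] by blast
    ultimately show "0 \<le> w t \<and> phi (LL lam) (hmap (h t) x) \<in> lattice_points {x. chP (LL lam) x}"
      unfolding lattice_points_def using T(2) t by blast
  qed
  show "\<exists>(K::real set) w z. finite K \<and> (\<forall>k\<in>K. 0 \<le> w k \<and> z k \<in> lattice_points {x. chP (LL lam) x}) \<and> sum w K = 1 \<and> y = (\<lambda>p. \<Sum>k\<in>K. w k * z k p)"
    by (intro exI[of _ T] exI[of _ w] exI[of _ "\<lambda>t. phi (LL lam) (hmap (h t) x)"] conjI T(1) T(3) zl dec)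
qed

lemma nL_int: "\<forall>a\<in>A. real n * LL lam a \<in> \<int>" by auto

lemma hermite_setup:
  assumes n: "n \<ge> 1" and xi: "\<forall>p. x p \<in> \<int>"
    and h_def: "h = (\<lambda>k v. real_of_int \<lfloor>(v + real k) / real n\<rfloor>)"
  shows "\<forall>k\<in>{..<n}. mono (h k)"
    and "\<forall>k\<in>{..<n}. \<forall>a\<in>A. h k (real n * LL lam a) = LL lam a"
    and "\<forall>v\<in>x ` (P - A) \<union> (\<lambda>a. real n * LL lam a) ` A. (\<Sum>k\<in>{..<n}. 1 * h k v) = v"
    and "\<forall>k v. h k v \<in> \<int>"
proof -
  show "\<forall>k\<in>{..<n}. mono (h k)" unfolding h_def using mono_floor_div by blast
  show "\<forall>k\<in>{..<n}. \<forall>a\<in>A. h k (real n * LL lam a) = LL lam a"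
    unfolding h_def using floor_div_nat by auto
  show "\<forall>v\<in>x ` (P - A) \<union> (\<lambda>a. real n * LL lam a) ` A. (\<Sum>k\<in>{..<n}. 1 * h k v) = v"
  proof
    fix v assume "v \<in> x ` (P - A) \<union> (\<lambda>a. real n * LL lam a) ` A"
    then have "v \<in> \<int>" using xi by auto
    then obtain m where m: "v = real_of_int m" by (auto elim: Ints_cases)
    show "(\<Sum>k\<in>{..<n}. 1 * h k v) = v" unfolding h_def m using hermite_real[OF n, of m] by simp
  qed
  show "\<forall>k v. h k v \<in> \<int>" unfolding h_def by simp
qed

lemma O_normal: "normal_polytope {x. ordP (LL lam) x}"
proof (rule normal_generic)
  show "(\<lambda>p. \<Sum>k\<in>K. u k * z k p) \<in> {x. ordP (LL lam) x}"
    if "finite K" "\<forall>k\<in>K. 0 \<le> u k \<and> z k \<in> {x. ordP (LL lam) x}" "sum u K = 1" for K :: "nat set" and u z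
    using ordP_convex[of K u "LL lam" z] that by auto
  fix n :: nat and x assume n: "n \<ge> 1" and "x \<in> lattice_points (dilate n {x. ordP (LL lam) x})"
  then have x: "ordP (\<lambda>a. real n * LL lam a) x" and xi: "\<forall>p. x p \<in> \<int>"
    unfolding lattice_points_def dil_O[OF n] by auto
  define h where "h = (\<lambda>k v. real_of_int \<lfloor>(v + real k) / real n\<rfloor>)"
  note hs = hermite_setup[OF n xi h_def]
  have dec: "x = (\<lambda>p. \<Sum>k\<in>{..<n}. 1 * hmap (h k) x p)"
    by (rule decomp(1)[OF x _ hs(1) hs(2) hs(3)]) simp
  have zl: "\<forall>k<n. hmap (h k) x \<in> lattice_points {x. ordP (LL lam) x}"
  proof (intro allI impI)
    fix k assume k: "k < n"
    have "mono (h k)" using hs(1) k by blast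
    moreover have "\<forall>a\<in>A. h k (real n * LL lam a) = LL lam a" using hs(2) k by blast
    ultimately have "ordP (LL lam) (hmap (h k) x)" by (rule hmap_ord[OF x])
    moreover have "\<forall>p. hmap (h k) x p \<in> \<int>" using hs(4) by (intro allI hmap_int) blast
    ultimately show "hmap (h k) x \<in> lattice_points {x. ordP (LL lam) x}"
      unfolding lattice_points_def by blast
  qed
  have "x = (\<lambda>p. \<Sum>k<n. hmap (h k) x p)" using dec by simp
  then show "\<exists>z. (\<forall>k<n. z k \<in> lattice_points {x. ordP (LL lam) x}) \<and> x = (\<lambda>p. \<Sum>k<n. z k p)"
    using zl by (intro exI[of _ "\<lambda>k. hmap (h k) x"] conjI) auto
qed

lemma C_normal: "normal_polytope {x. chP (LL lam) x}"
proof (rule normal_generic)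
  show "(\<lambda>p. \<Sum>k\<in>K. u k * z k p) \<in> {x. chP (LL lam) x}"
    if "finite K" "\<forall>k\<in>K. 0 \<le> u k \<and> z k \<in> {x. chP (LL lam) x}" "sum u K = 1" for K :: "nat set" and u z
    using chP_convex[of K u "LL lam" z] that by auto
  fix n :: nat and y assume n: "n \<ge> 1" and "y \<in> lattice_points (dilate n {x. chP (LL lam) x})"
  then have y: "chP (\<lambda>a. real n * LL lam a) y" and yi: "\<forall>p. y p \<in> \<int>"
    unfolding lattice_points_def dil_C[OF n] by auto
  define x where "x = psi (\<lambda>a. real n * LL lam a) y"
  have x: "ordP (\<lambda>a. real n * LL lam a) x" unfolding x_def by (rule psi_ord[OF y])
  have yx: "y = phi (\<lambda>a. real n * LL lam a) x" unfolding x_def by (rule phi_psi[OF y, symmetric])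
  have xi: "\<forall>p. x p \<in> \<int>" unfolding x_def using psi_int[OF yi nL_int] by blast
  define h where "h = (\<lambda>k v. real_of_int \<lfloor>(v + real k) / real n\<rfloor>)"
  note hs = hermite_setup[OF n xi h_def]
  have dec: "y = (\<lambda>p. \<Sum>k\<in>{..<n}. 1 * phi (LL lam) (hmap (h k) x) p)"
    unfolding yx by (rule decomp(2)[OF x _ hs(1) hs(2) hs(3)]) simp
  have zl: "\<forall>k<n. phi (LL lam) (hmap (h k) x) \<in> lattice_points {x. chP (LL lam) x}"
  proof (intro allI impI)
    fix k assume k: "k < n"
    have "mono (h k)" using hs(1) k by blast
    moreover have "\<forall>a\<in>A. h k (real n * LL lam a) = LL lam a" using hs(2) k by blast
    ultimately have "ordP (LL lam) (hmap (h k) x)" by (rule hmap_ord[OF x])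
    then have "chP (LL lam) (phi (LL lam) (hmap (h k) x))" by (rule phi_ch)
    moreover have "\<forall>p. hmap (h k) x p \<in> \<int>" using hs(4) by (intro allI hmap_int) blast
    then have "\<forall>p. phi (LL lam) (hmap (h k) x) p \<in> \<int>" using phi_int[OF _ ints_LL] by blast
    ultimately show "phi (LL lam) (hmap (h k) x) \<in> lattice_points {x. chP (LL lam) x}"
      unfolding lattice_points_def by blast
  qed
  have "y = (\<lambda>p. \<Sum>k<n. phi (LL lam) (hmap (h k) x) p)" using dec by simp
  then show "\<exists>z. (\<forall>k<n. z k \<in> lattice_points {x. chP (LL lam) x}) \<and> y = (\<lambda>p. \<Sum>k<n. z k p)"
    using zl by (intro exI[of _ "\<lambda>k. phi (LL lam) (hmap (h k) x)"] conjI) auto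
qed

end

theorem corollary2p3:
  fixes P A :: "'a set" and lt :: "'a \<Rightarrow> 'a \<Rightarrow> bool" and lam :: "'a \<Rightarrow> nat"
  assumes "marked_poset P lt A"
  shows "lattice_polytope (marked_order_polytope P lt A lam) \<and>
         normal_polytope (marked_order_polytope P lt A lam) \<and>
         lattice_polytope (marked_chain_polytope P lt A lam) \<and>
         normal_polytope (marked_chain_polytope P lt A lam)"
proof -
  interpret mpos P lt A using assms by unfold_locales
  show ?thesis unfolding O_eq C_eq using O_lattice O_normal C_lattice C_normal by blast
qed

end
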